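(* Assume (A1): if $R<\infty$ there is $q_0\in(0,1)$ with $\mathrm{supp}\,Q_0\subseteq[0,q_0R]^d$, and if $R=\infty$ there is $M>0$ with $\mathrm{supp}\,Q_0\subseteq[0,M]^d$. Then the mixing distribution $Q_0$ is identifiable: if $Q_1$ is any probability measure on $\Theta$ with $\int_\Theta\prod_{j=1}^df_{\theta_j}(k_j)\,dQ_0(\boldsymbol\theta)=\int_\Theta\prod_{j=1}^df_{\theta_j}(k_j)\,dQ_1(\boldsymbol\theta)$ for all $\mathbf k=(k_1,\dots,k_d)\in\mathbb N^d$, then $Q_1=Q_0$.
   Context: Let $b_k>0$ for all $k\in\mathbb N=\{0,1,2,\dots\}$, $b(\theta)=\sum_{k\ge0}b_k\theta^k$ with radius of convergence $R\in(0,\infty]$, $\mathcal T=[0,R]$ if $b(R)<\infty$ and $\mathcal T=[0,R)$ if $b(R)=\infty$, $f_\theta(k)=b_k\theta^k/b(\theta)$. Fix $d\ge1$, $\Theta=\mathcal T^d$, and let $Q_0$ be a probability measure on $\Theta$. *)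

theory Defs
  imports "HOL-Probability.Probability"
begin

definition bfun :: "(nat \<Rightarrow> real) \<Rightarrow> real \<Rightarrow> real" where
  "bfun b \<theta> = (\<Sum>k. b k * \<theta> ^ k)"

definition Tset :: "(nat \<Rightarrow> real) \<Rightarrow> real set" where
  "Tset b = {\<theta>. 0 \<le> \<theta> \<and> (ereal \<theta> < conv_radius b \<or>
       (ereal \<theta> = conv_radius b \<and> summable (\<lambda>k. b k * \<theta> ^ k)))}"

definition psd :: "(nat \<Rightarrow> real) \<Rightarrow> real \<Rightarrow> nat \<Rightarrow> real" where
  "psd b \<theta> k = b k * \<theta> ^ k / bfun b \<theta>"

definition Theta :: "(nat \<Rightarrow> real) \<Rightarrow> (real ^ 'd) set" where
  "Theta b = {\<theta>. \<forall>j. \<theta> $ j \<in> Tset b}"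

definition msupport :: "('a::topological_space) measure \<Rightarrow> 'a set" where
  "msupport Q = {x \<in> space Q. \<forall>U. open U \<and> x \<in> U \<longrightarrow> emeasure Q (U \<inter> space Q) > 0}"

end

theory Submission imports Defs begin

definition gw :: "(nat \<Rightarrow> real) \<Rightarrow> real ^ 'd \<Rightarrow> real" where
  "gw b x = (\<Prod>j\<in>UNIV. inverse (bfun b (x $ j)))"

definition mon :: "('d \<Rightarrow> nat) \<Rightarrow> real ^ 'd \<Rightarrow> real" where
  "mon k x = (\<Prod>j\<in>UNIV. (x $ j) ^ (k j))"

lemma Tset_summable:
  assumes "t \<in> Tset b" shows "summable (\<lambda>k. b k * t ^ k)"
proof -
  have t0: "0 \<le> t" using assms by (simp add: Tset_def)
  show ?thesis
  proof (cases "ereal t < conv_radius b")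
    case True
    then show ?thesis using t0 by (intro summable_in_conv_radius) simp
  next
    case False
    then show ?thesis using assms by (auto simp: Tset_def)
  qed
qed

lemma bfun_ge:
  assumes bp: "\<And>k. b k > 0" and t: "t \<in> Tset b" shows "b k * t ^ k \<le> bfun b t"
proof -
  have t0: "0 \<le> t" using t by (simp add: Tset_def)
  have "sum (\<lambda>k. b k * t ^ k) {k} \<le> (\<Sum>k. b k * t ^ k)"
    by (rule sum_le_suminf[OF Tset_summable[OF t]]) (simp_all, metis bp t0 less_imp_le mult_nonneg_nonneg zero_le_power)
  then show ?thesis by (simp add: bfun_def)
qed

lemma bfun_pos:
  assumes bp: "\<And>k. b k > 0" and t: "t \<in> Tset b" shows "0 < bfun b t"
  using bfun_ge[OF bp t, of 0] bp[of 0] by simp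

lemma psd_prod:
  "(\<Prod>j\<in>UNIV. psd b (x $ j) (k j)) = (\<Prod>j\<in>UNIV. b (k j)) * (mon k x * gw b x)"
  by (simp add: psd_def mon_def gw_def prod.distrib divide_inverse mult.assoc)

lemma psd_bounds:
  assumes bp: "\<And>k. b k > 0" and t: "t \<in> Tset b" shows "0 \<le> psd b t k" "psd b t k \<le> 1"
proof -
  have t0: "0 \<le> t" using t by (simp add: Tset_def)
  show "0 \<le> psd b t k" unfolding psd_def using bfun_pos[OF bp t] bp[of k] t0 by simp
  show "psd b t k \<le> 1" unfolding psd_def using bfun_pos[OF bp t] bfun_ge[OF bp t, of k] by simp
qed

lemma mon_gw_bounds:
  assumes bp: "\<And>k. b k > 0" and x: "x \<in> Theta b"
  shows "0 \<le> mon k x * gw b x" "mon k x * gw b x \<le> 1 / (\<Prod>j\<in>UNIV. b (k j))"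
proof -
  have P: "0 < (\<Prod>j\<in>UNIV. b (k j))" using bp by (simp add: prod_pos)
  have xs: "\<And>j. x $ j \<in> Tset b" using x by (simp add: Theta_def)
  have e: "mon k x * gw b x = (\<Prod>j\<in>UNIV. psd b (x $ j) (k j)) / (\<Prod>j\<in>UNIV. b (k j))"
    using P bp[THEN less_imp_neq, symmetric] by (simp add: psd_prod field_simps)
  have a: "0 \<le> (\<Prod>j\<in>UNIV. psd b (x $ j) (k j))" by (rule prod_nonneg) (simp add: psd_bounds[OF bp xs])
  have c: "(\<Prod>j\<in>UNIV. psd b (x $ j) (k j)) \<le> 1"
    by (rule prod_le_1) (simp add: psd_bounds[OF bp xs])
  show "0 \<le> mon k x * gw b x" using e a P by simp
  show "mon k x * gw b x \<le> 1 / (\<Prod>j\<in>UNIV. b (k j))" using e c P by (simp add: divide_right_mono)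
qed

lemma gw_pos:
  assumes bp: "\<And>k. b k > 0" and x: "x \<in> Theta b" shows "0 < gw b x"
  using x bfun_pos[OF bp] unfolding gw_def Theta_def by (auto intro!: prod_pos)

lemma bfun_borel[measurable]: "bfun b \<in> borel_measurable borel"
proof -
  have "bfun b = (\<lambda>t. lim (\<lambda>n. \<Sum>i<n. b i * t ^ i))"
    by (auto simp: fun_eq_iff bfun_def suminf_def sums_def lim_def)
  then show ?thesis by simp
qed

lemma gw_borel[measurable]: "gw b \<in> borel_measurable borel"
  unfolding gw_def by measurable

lemma mon_borel[measurable]: "mon k \<in> borel_measurable borel"
  unfolding mon_def by measurable


lemma meas_Q:
  assumes "sets Q = sets (restrict_space borel S)" "f \<in> measurable borel N"
  shows "f \<in> measurable Q N"
  by (subst measurable_cong_sets[OF assms(1) refl]) (rule measurable_restrict_space1[OF assms(2)])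

lemma space_Q:
  assumes "sets Q = sets (restrict_space borel S)" shows "space Q = S"
  using sets_eq_imp_space_eq[OF assms] by (simp add: space_restrict_space)

lemma AE_S:
  assumes "sets Q = sets (restrict_space borel S)" shows "AE x in Q. x \<in> S"
  by (rule AE_I2) (simp add: space_Q[OF assms])

lemma int_bounded:
  fixes f :: "real ^ 'd \<Rightarrow> real"
  assumes "prob_space Q" "sets Q = sets (restrict_space borel S)" "f \<in> borel_measurable borel"
    "\<And>x. x \<in> S \<Longrightarrow> \<bar>f x\<bar> \<le> B"
  shows "integrable Q f"
proof -
  interpret prob_space Q by fact
  show ?thesis
  proof (rule integrable_const_bound[where B=B])
    show "AE x in Q. norm (f x) \<le> B" using AE_S[OF assms(2)] by (rule AE_mp) (auto intro!: AE_I2 assms(4))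
    show "f \<in> borel_measurable Q" by (rule meas_Q[OF assms(2,3)])
  qed
qed

lemma int_mon:
  fixes k :: "'d::finite \<Rightarrow> nat"
  assumes bp: "\<And>k. b k > 0" and "prob_space Q" "sets Q = sets (restrict_space borel (Theta b))"
  shows "integrable Q (\<lambda>x. mon k x * gw b x)"
proof (rule int_bounded[OF assms(2,3), where B="1 / (\<Prod>j\<in>UNIV. b (k j))"])
  show "(\<lambda>x. mon k x * gw b x) \<in> borel_measurable borel" by simp
  fix x :: "real^'d" assume x: "x \<in> Theta b"
  have "0 \<le> mon k x * gw b x" "mon k x * gw b x \<le> 1 / (\<Prod>j\<in>UNIV. b (k j))"
    using mon_gw_bounds[where b=b and x=x and k=k, OF bp x] by auto
  then show "\<bar>mon k x * gw b x\<bar> \<le> 1 / (\<Prod>j\<in>UNIV. b (k j))" by linarith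
qed

definition pl :: "(real \<times> ('d \<Rightarrow> nat)) list \<Rightarrow> real ^ 'd \<Rightarrow> real" where
  "pl L x = (\<Sum>(a,k)\<leftarrow>L. a * mon k x)"

lemma pl_simps[simp]: "pl [] x = 0" "pl ((a,k) # L) x = a * mon k x + pl L x"
  "pl (L1 @ L2) x = pl L1 x + pl L2 x"
  by (simp_all add: pl_def)

lemma mon_add: "mon (\<lambda>j. k j + l j) x = mon k x * mon l x"
  by (simp add: mon_def power_add prod.distrib)

lemma mon_zero: "mon (\<lambda>j. 0) x = 1"
  by (simp add: mon_def)

lemma mon_single: "mon (\<lambda>j. if j = i then n else 0) x = (x $ i) ^ n"
proof -
  have "mon (\<lambda>j. if j = i then n else 0) x = (\<Prod>j\<in>UNIV. if j = i then (x $ j) ^ n else 1)"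
    unfolding mon_def by (intro prod.cong) auto
  also have "\<dots> = (x $ i) ^ n" by (simp add: prod.delta')
  finally show ?thesis .
qed

lemma pl_map: "pl (map (\<lambda>(c,l). (a*c, \<lambda>j. k j + l j)) L) x = a * mon k x * pl L x"
  by (induction L) (auto simp: mon_add algebra_simps)

lemma pl_mult: "pl L1 x * pl L2 x = pl (concat (map (\<lambda>(a,k). map (\<lambda>(c,l). (a*c, \<lambda>j. k j + l j)) L2) L1)) x"
  by (induction L1) (auto simp: pl_map algebra_simps)

lemma pl_poly:
  fixes p :: "real ^ 'd \<Rightarrow> real"
  assumes "real_polynomial_function p" shows "\<exists>L. p = pl L"
  using assms
proof (induction p rule: real_polynomial_function.induct)
  case (linear f)
  obtain xs :: "'d list" where xs: "set xs = UNIV" "distinct xs"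
    using finite_distinct_list[of "UNIV::'d set"] by auto
  have "f x = (\<Sum>i\<in>UNIV. f (axis i 1) * x $ i)" for x
  proof -
    have "f x = f (\<Sum>i\<in>UNIV. (x$i) *s axis i 1)" by (simp add: basis_expansion)
    also have "\<dots> = (\<Sum>i\<in>UNIV. f ((x$i) *s axis i 1))"
      using linear by (simp add: bounded_linear.linear linear_sum)
    also have "\<dots> = (\<Sum>i\<in>UNIV. f (axis i 1) * x $ i)"
    proof (rule sum.cong)
      fix i
      have "f ((x$i) *s axis i 1) = x $ i * f (axis i 1)"
        using linear by (simp add: scalar_mult_eq_scaleR linear_scale bounded_linear.linear)
      then show "f ((x$i) *s axis i 1) = f (axis i 1) * x $ i" by (simp only: mult.commute)
    qed simp
    finally show ?thesis .
  qed
  moreover have "(\<Sum>i\<in>UNIV. f (axis i 1) * x $ i) = pl (map (\<lambda>i. (f (axis i 1), \<lambda>j. if j = i then 1 else 0)) xs) x" for x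
  proof -
    have "(\<Sum>i\<in>UNIV. f (axis i 1) * x $ i) = (\<Sum>i\<leftarrow>xs. f (axis i 1) * x $ i)"
      using sum.distinct_set_conv_list[OF xs(2), of "\<lambda>i. f (axis i 1) * x $ i"] xs(1) by simp
    also have "\<dots> = pl (map (\<lambda>i. (f (axis i 1), \<lambda>j. if j = i then 1 else 0)) xs) x"
      by (induction xs) (simp_all add: mon_single)
    finally show ?thesis .
  qed
  ultimately have "\<And>x. f x = pl (map (\<lambda>i. (f (axis i 1), \<lambda>j. if j = i then 1 else 0)) xs) x"
    by (rule trans)
  then show ?case by (intro exI[of _ "map (\<lambda>i. (f (axis i 1), \<lambda>j. if j = i then 1 else 0)) xs"]) (rule ext)
next
  case (const c)
  show ?case by (intro exI[of _ "[(c, \<lambda>j. 0)]"]) (auto simp: mon_zero)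
next
  case (add f g)
  then obtain L1 L2 where "f = pl L1" "g = pl L2" by blast
  then show ?case by (intro exI[of _ "L1 @ L2"]) auto
next
  case (mult f g)
  then obtain L1 L2 where "f = pl L1" "g = pl L2" by blast
  then show ?case
    by (intro exI[of _ "concat (map (\<lambda>(a,k). map (\<lambda>(c,l). (a*c, \<lambda>j. k j + l j)) L2) L1)"])
       (simp add: fun_eq_iff pl_mult)
qed

lemma pl_borel[measurable]: "pl L \<in> borel_measurable borel"
  by (induction L) (auto simp: pl_def)

lemma pl_int:
  assumes bp: "\<And>k. b k > 0" and "prob_space Q" "sets Q = sets (restrict_space borel (Theta b))"
  shows "integrable Q (\<lambda>x. pl L x * gw b x)"
proof (induction L)
  case Nil then show ?case by simp
next
  case (Cons ak L)
  obtain a k where ak: "ak = (a,k)" by fastforce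
  have "integrable Q (\<lambda>x. a * (mon k x * gw b x) + pl L x * gw b x)"
    using int_mon[OF assms, of k] Cons by auto
  then show ?case by (simp add: ak algebra_simps)
qed

lemma pl_eq:
  assumes bp: "\<And>k. b k > 0" and "prob_space Q0" "sets Q0 = sets (restrict_space borel (Theta b))"
    and "prob_space Q1" "sets Q1 = sets (restrict_space borel (Theta b))"
    and mom: "\<And>k. (\<integral>x. mon k x * gw b x \<partial>Q0) = (\<integral>x. mon k x * gw b x \<partial>Q1)"
  shows "(\<integral>x. pl L x * gw b x \<partial>Q0) = (\<integral>x. pl L x * gw b x \<partial>Q1)"
proof (induction L)
  case Nil then show ?case by simp
next
  case (Cons ak L)
  obtain a k where ak: "ak = (a,k)" by fastforce
  have e: "(\<lambda>x. pl (ak # L) x * gw b x) = (\<lambda>x. a * (mon k x * gw b x) + pl L x * gw b x)"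
    by (simp add: ak algebra_simps)
  show ?case unfolding e
    using int_mon[OF bp assms(2,3), of k] int_mon[OF bp assms(4,5), of k]
      pl_int[OF bp assms(2,3), of L] pl_int[OF bp assms(4,5), of L] Cons mom[of k]
    by simp
qed


lemma c_cont:
  assumes "0 \<le> c" "ereal c < conv_radius b" "0 \<le> y" "y \<le> c"
  shows "isCont (bfun b) y"
proof -
  obtain K where K: "c < K" "ereal K < conv_radius b"
    using ereal_dense2[OF assms(2)] by (metis ereal_dense2 ereal_less(2) less_ereal.simps(1)) 
  have "summable (\<lambda>n. b n * K ^ n)"
    using K assms by (intro summable_in_conv_radius) simp
  moreover have "norm y < norm K" using K assms by simp
  ultimately have "isCont (\<lambda>x. \<Sum>n. b n * x ^ n) y" by (rule isCont_powser)
  moreover have "bfun b = (\<lambda>x. \<Sum>n. b n * x ^ n)" by (simp add: fun_eq_iff bfun_def)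
  ultimately show ?thesis by simp
qed


theorem proposition6:
  fixes b :: "nat \<Rightarrow> real"
    and Q0 Q1 :: "(real ^ 'd) measure"
  assumes b_pos: "\<And>k. b k > 0"
    and R_pos: "conv_radius b > 0"
    and Q0_prob: "prob_space Q0"
    and Q0_sets: "sets Q0 = sets (restrict_space borel (Theta b))"
    and A1_fin: "conv_radius b < \<infinity> \<Longrightarrow>
       \<exists>q0. 0 < q0 \<and> q0 < 1 \<and>
         msupport Q0 \<subseteq> {\<theta>. \<forall>j. 0 \<le> \<theta> $ j \<and> \<theta> $ j \<le> q0 * real_of_ereal (conv_radius b)}"
    and A1_inf: "conv_radius b = \<infinity> \<Longrightarrow>
       \<exists>M. 0 < M \<and> msupport Q0 \<subseteq> {\<theta>. \<forall>j. 0 \<le> \<theta> $ j \<and> \<theta> $ j \<le> M}"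
    and Q1_prob: "prob_space Q1"
    and Q1_sets: "sets Q1 = sets (restrict_space borel (Theta b))"
    and eq: "\<And>k :: 'd \<Rightarrow> nat.
       (\<integral>\<theta>. (\<Prod>j\<in>UNIV. psd b (\<theta> $ j) (k j)) \<partial>Q0) =
       (\<integral>\<theta>. (\<Prod>j\<in>UNIV. psd b (\<theta> $ j) (k j)) \<partial>Q1)"
  shows "Q1 = Q0"
proof -
  interpret P0: prob_space Q0 by fact
  interpret P1: prob_space Q1 by fact
  define S :: "(real^'d) set" where "S = Theta b"
  obtain c where c0: "0 < c" and cR: "ereal c < conv_radius b"
    and supp: "msupport Q0 \<subseteq> {\<theta>. \<forall>j. 0 \<le> \<theta> $ j \<and> \<theta> $ j \<le> c}"
  proof (cases "conv_radius b = \<infinity>")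
    case True
    then obtain M where "0 < M" "msupport Q0 \<subseteq> {\<theta>. \<forall>j. 0 \<le> \<theta> $ j \<and> \<theta> $ j \<le> M}"
      using A1_inf by blast
    then show ?thesis using that[of M] True by simp
  next
    case False
    then have fin: "conv_radius b < \<infinity>" by (simp add: less_top)
    then obtain q0 where q: "0 < q0" "q0 < 1" and
      s: "msupport Q0 \<subseteq> {\<theta>. \<forall>j. 0 \<le> \<theta> $ j \<and> \<theta> $ j \<le> q0 * real_of_ereal (conv_radius b)}"
      using A1_fin by blast
    obtain R where R: "conv_radius b = ereal R" using fin R_pos by (cases "conv_radius b") auto
    have "0 < R" using R R_pos by simp
    show ?thesis
      by (rule that[of "q0 * R"]) (use q s R \<open>0 < R\<close> in auto)
  qed
  define K where "K = {\<theta>::real^'d. \<forall>j. 0 \<le> \<theta> $ j \<and> \<theta> $ j \<le> c}"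
  have KS: "K \<subseteq> S"
  proof
    fix x assume "x \<in> K"
    then have "0 \<le> x $ j \<and> ereal (x $ j) < conv_radius b" for j
      using cR \<open>x \<in> K\<close> unfolding K_def by (auto intro: order_le_less_trans[of _ "ereal c"])
    then show "x \<in> S" by (auto simp: S_def Theta_def Tset_def)
  qed
  have cont: "isCont (bfun b) y" if "0 \<le> y" "y \<le> c" for y
    using c_cont[OF _ cR that] c0 by simp
  have space0: "space Q0 = S" and space1: "space Q1 = S"
    using space_Q[OF Q0_sets] space_Q[OF Q1_sets] by (simp_all add: S_def)
  have AE0: "AE x in Q0. x \<in> K"
  proof -
    define F where "F = {U::(real^'d) set. open U \<and> emeasure Q0 (U \<inter> S) = 0}"
    have "\<forall>U\<in>F. open U" by (simp add: F_def)
    then obtain F' where F': "F' \<subseteq> F" "countable F'" "\<Union>F' = \<Union>F"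
      using Lindelof[of F] by metis
    have null: "(\<Union>U\<in>F'. U \<inter> S) \<in> null_sets Q0"
    proof (rule null_sets_UN')
      show "countable F'" by fact
      fix U assume "U \<in> F'"
      then have U: "open U" "emeasure Q0 (U \<inter> S) = 0" using F' by (auto simp: F_def)
      have "U \<inter> S \<in> sets Q0"
        using U Q0_sets by (auto simp: sets_restrict_space S_def Int_commute)
      then show "U \<inter> S \<in> null_sets Q0" using U by (simp add: null_sets_def)
    qed
    show ?thesis
    proof (rule AE_I'[OF null])
      show "{x \<in> space Q0. \<not> x \<in> K} \<subseteq> (\<Union>U\<in>F'. U \<inter> S)"
      proof
        fix x assume x: "x \<in> {x \<in> space Q0. \<not> x \<in> K}"
        then have xS: "x \<in> S" using space0 by simp
        have "x \<notin> msupport Q0" using x supp unfolding K_def by blast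
        then obtain U where U: "open U" "x \<in> U" "\<not> emeasure Q0 (U \<inter> space Q0) > 0"
          using x unfolding msupport_def by blast
        then have "U \<in> F" using space0 by (simp add: F_def)
        then have "x \<in> \<Union>F'" using F' U by blast
        then show "x \<in> (\<Union>U\<in>F'. U \<inter> S)" using xS by blast
      qed
    qed
  qed
  have mom: "(\<integral>x. mon k x * gw b x \<partial>Q0) = (\<integral>x. mon k x * gw b x \<partial>Q1)" for k
  proof -
    have P: "0 < (\<Prod>j\<in>UNIV. b (k j))" using b_pos by (simp add: prod_pos)
    have "(\<Prod>j\<in>UNIV. b (k j)) * (\<integral>x. mon k x * gw b x \<partial>Q0) =
          (\<Prod>j\<in>UNIV. b (k j)) * (\<integral>x. mon k x * gw b x \<partial>Q1)"
      using eq[of k] by (simp add: psd_prod)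
    then show ?thesis using P by (metis less_irrefl mult_left_cancel)
  qed
  define G where "G = 1 / (\<Prod>j\<in>(UNIV::'d set). b 0)"
  have gwG: "0 < gw b x \<and> gw b x \<le> G" if "x \<in> S" for x
    using gw_pos[where b=b and x=x, OF b_pos] mon_gw_bounds(2)[where b=b and x=x and k="\<lambda>_. 0", OF b_pos] that
    by (simp add: S_def G_def mon_zero)
  have G0: "0 < G" using b_pos by (simp add: G_def prod_pos)
  have AES0: "AE x in Q0. x \<in> S" and AES1: "AE x in Q1. x \<in> S"
    using AE_S[OF Q0_sets] AE_S[OF Q1_sets] by (simp_all add: S_def)
  have S_nonneg: "0 \<le> x $ j" if "x \<in> S" for x j
    using that by (simp add: S_def Theta_def Tset_def)
  have tail: "AE x in Q1. \<not> t < x $ j" if "c < t" for j t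
  proof -
    have t0: "0 < t" using that c0 by simp
    define J where "J = (\<integral>x. (if t < x $ j then gw b x else 0) \<partial>Q1)"
    have intJ: "integrable Q1 (\<lambda>x. if t < x $ j then gw b x else 0)"
      by (rule int_bounded[OF Q1_prob Q1_sets, where B=G]) (use gwG G0 in \<open>force simp: S_def\<close>)+
    have nn: "AE x in Q1. 0 \<le> (if t < x $ j then gw b x else 0)"
      using AES1 by eventually_elim (use gwG in \<open>auto intro: less_imp_le\<close>)
    have J0: "0 \<le> J" unfolding J_def by (rule integral_nonneg_AE[OF nn])
    have bound: "t ^ n * J \<le> c ^ n * G" for n
    proof -
      define k where "k = (\<lambda>i. if i = j then n else 0)"
      have mk: "mon k x = (x $ j) ^ n" for x unfolding k_def by (rule mon_single)
      have "t ^ n * J = (\<integral>x. t ^ n * (if t < x $ j then gw b x else 0) \<partial>Q1)"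
        by (simp add: J_def)
      also have "\<dots> \<le> (\<integral>x. mon k x * gw b x \<partial>Q1)"
      proof (rule integral_mono_AE)
        show "integrable Q1 (\<lambda>x. t ^ n * (if t < x $ j then gw b x else 0))" using intJ by simp
        show "integrable Q1 (\<lambda>x. mon k x * gw b x)" by (rule int_mon[OF b_pos Q1_prob Q1_sets])
        show "AE x in Q1. t ^ n * (if t < x $ j then gw b x else 0) \<le> mon k x * gw b x"
          using AES1
        proof eventually_elim
          case (elim x)
          have g: "0 < gw b x" using gwG elim by blast
          have xj: "0 \<le> x $ j" using S_nonneg elim by blast
          show ?case
          proof (cases "t < x $ j")
            case True
            then have "t ^ n \<le> (x $ j) ^ n" using t0 by (intro power_mono) auto
            then show ?thesis using True g mk by (simp add: mult_right_mono)
          qed (use g xj mk in simp)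
        qed
      qed
      also have "\<dots> = (\<integral>x. mon k x * gw b x \<partial>Q0)" by (simp add: mom)
      also have "\<dots> \<le> (\<integral>x. c ^ n * G \<partial>Q0)"
      proof (rule integral_mono_AE)
        show "integrable Q0 (\<lambda>x. mon k x * gw b x)" by (rule int_mon[OF b_pos Q0_prob Q0_sets])
        show "integrable Q0 (\<lambda>x. c ^ n * G)" by simp
        show "AE x in Q0. mon k x * gw b x \<le> c ^ n * G"
          using AE0
        proof eventually_elim
          case (elim x)
          then have "x \<in> S" using KS by blast
          then have g: "0 < gw b x" "gw b x \<le> G" using gwG by auto
          have "0 \<le> x $ j" "x $ j \<le> c" using elim by (auto simp: K_def)
          then have "(x $ j) ^ n \<le> c ^ n" by (intro power_mono) auto
          then show ?case using g mk \<open>0 \<le> x $ j\<close> c0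
            by (simp add: mult_mono less_imp_le)
        qed
      qed
      also have "\<dots> = c ^ n * G" by (simp add: P0.prob_space)
      finally show ?thesis .
    qed
    have "J = 0"
    proof (rule ccontr)
      assume "J \<noteq> 0"
      then have "0 < J / G" using J0 G0 by simp
      moreover have "c / t < 1" using that t0 by simp
      ultimately obtain n where n: "(c / t) ^ n < J / G" using real_arch_pow_inv by blast
      then have "c ^ n / t ^ n < J / G" by (simp add: power_divide)
      then have "c ^ n * G < t ^ n * J" using G0 t0 by (simp add: field_simps)
      then show False using bound[of n] by simp
    qed
    then have "AE x in Q1. (if t < x $ j then gw b x else 0) = 0"
      using integral_nonneg_eq_0_iff_AE[OF intJ nn] by (simp add: J_def)
    then show ?thesis using AES1 by eventually_elim (use gwG in fastforce)
  qed
  have AE1: "AE x in Q1. x \<in> K"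
  proof -
    have "AE x in Q1. \<forall>j. \<forall>m::nat. \<not> c + 1 / Suc m < x $ j"
      by (intro AE_all_countable[THEN iffD2] allI tail) simp
    then show ?thesis using AES1
    proof eventually_elim
      case (elim x)
      have "x $ j \<le> c" for j
      proof (rule ccontr)
        assume "\<not> x $ j \<le> c"
        then obtain m where "inverse (real (Suc m)) < x $ j - c"
          using reals_Archimedean[of "x $ j - c"] by auto
        then show False using elim(1) by (auto simp: field_simps)
      qed
      then show ?case using S_nonneg elim by (auto simp: K_def)
    qed
  qed
  have cont_eq: "(\<integral>x. \<phi> x \<partial>Q0) = (\<integral>x. \<phi> x \<partial>Q1)"
    if c\<phi>: "continuous_on UNIV \<phi>" and \<phi>B: "\<And>x. \<bar>\<phi> x\<bar> \<le> B" for \<phi> :: "real^'d \<Rightarrow> real" and B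
  proof -
    define w where "w x = (\<Prod>j\<in>UNIV. bfun b (x $ j))" for x :: "real^'d"
    define h where "h x = \<phi> x * w x" for x
    have wmeas[measurable]: "w \<in> borel_measurable borel" unfolding w_def by measurable
    have \<phi>meas[measurable]: "\<phi> \<in> borel_measurable borel" using c\<phi> by (rule borel_measurable_continuous_onI)
    have hmeas[measurable]: "h \<in> borel_measurable borel" unfolding h_def by measurable
    have wg: "w x * gw b x = 1" if "x \<in> S" for x
    proof -
      have "\<And>j. bfun b (x $ j) \<noteq> 0"
        using bfun_pos[where b=b, OF b_pos] that unfolding S_def Theta_def by (metis less_irrefl mem_Collect_eq)
      then show ?thesis by (simp add: w_def gw_def prod.distrib[symmetric])
    qed
    have hgw: "h x * gw b x = \<phi> x" if "x \<in> S" for x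
      using wg[OF that] by (simp add: h_def mult.assoc)
    have wc: "continuous_on K w"
    proof (rule continuous_at_imp_continuous_on, rule ballI)
      fix x assume "x \<in> K"
      then have "0 \<le> x $ j" "x $ j \<le> c" for j by (auto simp: K_def)
      then have "isCont (\<lambda>x. bfun b (x $ j)) x" for j
        using cont by (intro isCont_o2[OF _ cont]) (auto intro: bounded_linear.isCont[OF bounded_linear_vec_nth])
      then show "isCont w x" unfolding w_def by (intro continuous_prod) auto
    qed
    have hK: "continuous_on K h"
      unfolding h_def by (intro continuous_on_mult continuous_on_subset[OF c\<phi>] wc) auto
    have compK: "compact K"
    proof -
      have "K = cbox 0 (\<chi> j. c)" by (auto simp: K_def mem_box_cart)
      then show ?thesis by simp
    qed
    have approx: "\<bar>(\<integral>x. \<phi> x \<partial>Q) - (\<integral>x. pl L x * gw b x \<partial>Q)\<bar> \<le> \<delta> * G"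
      if Qp: "prob_space Q" and Qs: "sets Q = sets (restrict_space borel (Theta b))"
        and QK: "AE x in Q. x \<in> K" and L: "\<forall>x\<in>K. \<bar>h x - pl L x\<bar> < \<delta>" for Q L \<delta>
    proof -
      interpret prob_space Q by fact
      have AEs: "AE x in Q. x \<in> S" using AE_S[OF Qs] by (simp add: S_def)
      have i1: "integrable Q (\<lambda>x. h x * gw b x)"
        by (rule int_bounded[OF Qp Qs, where B=B]) (use hgw \<phi>B in \<open>auto simp: S_def\<close>)
      have i2: "integrable Q (\<lambda>x. pl L x * gw b x)" by (rule pl_int[OF b_pos Qp Qs])
      have e1: "(\<integral>x. \<phi> x \<partial>Q) = (\<integral>x. h x * gw b x \<partial>Q)"
      proof (rule integral_cong_AE)
        show "\<phi> \<in> borel_measurable Q" by (rule meas_Q[OF Qs \<phi>meas])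
        show "(\<lambda>x. h x * gw b x) \<in> borel_measurable Q" by (rule meas_Q[OF Qs]) measurable
        show "AE x in Q. \<phi> x = h x * gw b x" using AEs by eventually_elim (simp add: hgw)
      qed
      have "\<bar>(\<integral>x. \<phi> x \<partial>Q) - (\<integral>x. pl L x * gw b x \<partial>Q)\<bar>
            = \<bar>\<integral>x. (h x - pl L x) * gw b x \<partial>Q\<bar>"
        unfolding e1 using i1 i2 by (simp add: left_diff_distrib)
      also have "\<dots> \<le> (\<integral>x. \<bar>(h x - pl L x) * gw b x\<bar> \<partial>Q)" by (rule integral_abs_bound)
      also have "\<dots> \<le> (\<integral>x. \<delta> * G \<partial>Q)"
      proof (rule integral_mono_AE)
        show "integrable Q (\<lambda>x. \<bar>(h x - pl L x) * gw b x\<bar>)"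
          using i1 i2 by (simp add: left_diff_distrib)
        show "integrable Q (\<lambda>x. \<delta> * G)" by simp
        show "AE x in Q. \<bar>(h x - pl L x) * gw b x\<bar> \<le> \<delta> * G"
          using QK
        proof eventually_elim
          case (elim x)
          then have "x \<in> S" using KS by blast
          then have g: "0 < gw b x" "gw b x \<le> G" using gwG by auto
          have "\<bar>h x - pl L x\<bar> < \<delta>" using L elim by blast
          then show ?case using g by (simp add: abs_mult mult_mono less_imp_le)
        qed
      qed
      also have "\<dots> = \<delta> * G" by (simp add: prob_space)
      finally show ?thesis .
    qed
    show ?thesis
    proof (rule ccontr)
      assume ne: "(\<integral>x. \<phi> x \<partial>Q0) \<noteq> (\<integral>x. \<phi> x \<partial>Q1)"
      define d where "d = \<bar>(\<integral>x. \<phi> x \<partial>Q0) - (\<integral>x. \<phi> x \<partial>Q1)\<bar>"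
      have d0: "0 < d" using ne by (simp add: d_def)
      define \<delta> where "\<delta> = d / (4 * G)"
      have \<delta>0: "0 < \<delta>" using d0 G0 by (simp add: \<delta>_def)
      obtain p where p: "real_polynomial_function p" "\<And>x. x \<in> K \<Longrightarrow> \<bar>h x - p x\<bar> < \<delta>"
        using Stone_Weierstrass_real_polynomial_function[OF compK hK \<delta>0] by blast
      obtain L where pL: "p = pl L" using pl_poly[OF p(1)] by blast
      have a0: "\<bar>(\<integral>x. \<phi> x \<partial>Q0) - (\<integral>x. pl L x * gw b x \<partial>Q0)\<bar> \<le> \<delta> * G"
        by (rule approx[OF Q0_prob Q0_sets AE0]) (use p pL in auto)
      have a1: "\<bar>(\<integral>x. \<phi> x \<partial>Q1) - (\<integral>x. pl L x * gw b x \<partial>Q1)\<bar> \<le> \<delta> * G"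
        by (rule approx[OF Q1_prob Q1_sets AE1]) (use p pL in auto)
      have eqL: "(\<integral>x. pl L x * gw b x \<partial>Q0) = (\<integral>x. pl L x * gw b x \<partial>Q1)"
        by (rule pl_eq[OF b_pos Q0_prob Q0_sets Q1_prob Q1_sets mom])
      have "d \<le> 2 * (\<delta> * G)" using a0 a1 eqL unfolding d_def by linarith
      also have "\<dots> = d / 2" using G0 by (simp add: \<delta>_def)
      finally show False using d0 by simp
    qed
  qed
  define D0 where "D0 = distr Q0 borel id"
  define D1 where "D1 = distr Q1 borel id"
  have id0: "id \<in> measurable Q0 borel" and id1: "id \<in> measurable Q1 borel"
    using meas_Q[OF Q0_sets measurable_id] meas_Q[OF Q1_sets measurable_id] by (simp_all add: id_def)
  interpret D0: prob_space D0 unfolding D0_def by (rule P0.prob_space_distr[OF id0])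
  interpret D1: prob_space D1 unfolding D1_def by (rule P1.prob_space_distr[OF id1])
  have sD0: "sets D0 = sets borel" and sD1: "sets D1 = sets borel" by (simp_all add: D0_def D1_def)
  have closed_eq: "emeasure D0 C = emeasure D1 C" if Cc: "closed C" for C
  proof (cases "C = {}")
    case True then show ?thesis by simp
  next
    case False
    define f where "f n x = max 0 (1 - real n * infdist x C)" for n :: nat and x :: "real^'d"
    have fc: "continuous_on UNIV (f n)" for n unfolding f_def by (intro continuous_intros)
    have fB: "\<bar>f n x\<bar> \<le> 1" for n x
      using infdist_nonneg[of x C] unfolding f_def by auto
    have fmeas[measurable]: "f n \<in> borel_measurable borel" for n
      using fc[of n] by (rule borel_measurable_continuous_onI)
    have Cmeas[measurable]: "C \<in> sets borel" using Cc by (rule borel_closed)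
    have lim: "(\<lambda>n. f n x) \<longlonglongrightarrow> indicator C x" for x
    proof (cases "x \<in> C")
      case True
      then have "infdist x C = 0" by (rule infdist_zero)
      then show ?thesis using True by (simp add: f_def)
    next
      case xC: False
      have d0: "0 < infdist x C"
        using in_closed_iff_infdist_zero[OF Cc False, of x] infdist_nonneg[of x C] xC by simp
      obtain N :: nat where N: "1 / infdist x C < real N" using reals_Archimedean2 by blast
      have "eventually (\<lambda>n. f n x = 0) sequentially"
      proof (rule eventually_sequentiallyI[of N])
        fix n assume "N \<le> n"
        then have "1 / infdist x C < real n" using N by linarith
        then have "1 < real n * infdist x C" using d0 by (simp add: field_simps)
        then show "f n x = 0" by (simp add: f_def)
      qed
      then show ?thesis using xC by (simp add: tendsto_eventually)
    qed
    have DI: "(\<lambda>n. \<integral>x. f n x \<partial>D) \<longlonglongrightarrow> measure D C"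
      if Dp: "prob_space D" and Ds: "sets D = sets borel" for D :: "(real^'d) measure"
    proof -
      interpret prob_space D by fact
      have m: "g \<in> borel_measurable D" if "g \<in> borel_measurable borel" for g :: "real^'d \<Rightarrow> real"
        using that by (simp add: measurable_cong_sets[OF Ds refl])
      have "(\<lambda>n. \<integral>x. f n x \<partial>D) \<longlonglongrightarrow> (\<integral>x. indicator C x \<partial>D)"
      proof (rule integral_dominated_convergence[where w="\<lambda>_. 1"])
        show "(\<lambda>x. indicator C x :: real) \<in> borel_measurable D" by (rule m) measurable
        show "f n \<in> borel_measurable D" for n by (rule m) measurable
        show "integrable D (\<lambda>_. 1::real)" by simp
        show "AE x in D. (\<lambda>n. f n x) \<longlonglongrightarrow> indicator C x" using lim by simp
        show "AE x in D. norm (f n x) \<le> 1" for n using fB by simp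
      qed
      moreover have "C \<in> sets D" using Ds Cmeas by simp
      ultimately show ?thesis by simp
    qed
    have feq: "(\<integral>x. f n x \<partial>D0) = (\<integral>x. f n x \<partial>D1)" for n
    proof -
      have "(\<integral>x. f n x \<partial>D0) = (\<integral>x. f n x \<partial>Q0)"
        unfolding D0_def by (simp add: integral_distr[OF id0])
      also have "\<dots> = (\<integral>x. f n x \<partial>Q1)" by (rule cont_eq[OF fc fB])
      also have "\<dots> = (\<integral>x. f n x \<partial>D1)"
        unfolding D1_def by (simp add: integral_distr[OF id1])
      finally show ?thesis .
    qed
    have L1: "(\<lambda>n. \<integral>x. f n x \<partial>D0) \<longlonglongrightarrow> measure D1 C"
      using DI[OF D1.prob_space_axioms sD1] by (simp only: feq[symmetric])
    have "measure D0 C = measure D1 C"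
      by (rule LIMSEQ_unique[OF DI[OF D0.prob_space_axioms sD0] L1])
    then show ?thesis by (simp add: D0.emeasure_eq_measure D1.emeasure_eq_measure)
  qed
  have D: "D0 = D1"
  proof (rule measure_eqI_generator_eq[where E="Collect closed" and \<Omega>=UNIV and A="\<lambda>_. UNIV"])
    show "Int_stable (Collect closed)" by (auto simp: Int_stable_def)
    have "sets borel = sigma_sets UNIV (Collect closed)"
      by (subst borel_eq_closed) (simp add: sets_measure_of)
    then show "sets D0 = sigma_sets UNIV (Collect closed)" "sets D1 = sigma_sets UNIV (Collect closed)"
      using sD0 sD1 by simp_all
  qed (auto simp: closed_eq)
  show "Q1 = Q0"
  proof (rule measure_eqI)
    show "sets Q1 = sets Q0" using Q0_sets Q1_sets by simp
    fix A assume "A \<in> sets Q1"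
    then obtain B where B: "B \<in> sets borel" "A = S \<inter> B"
      using Q1_sets by (auto simp: sets_restrict_space S_def)
    have "emeasure Q1 A = emeasure D1 B"
      using B space1 by (simp add: D1_def emeasure_distr[OF id1] Int_commute)
    also have "\<dots> = emeasure D0 B" using D by simp
    also have "\<dots> = emeasure Q0 A"
      using B space0 by (simp add: D0_def emeasure_distr[OF id0] Int_commute)
    finally show "emeasure Q1 A = emeasure Q0 A" .
  qed
qed

end
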